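(* Let $\mathbf{C}$ be a small groupoid with set of objects $\mathbf{C_0}$, set of morphisms $\mathbf{C_1}$, and source and target maps $s,t \colon \mathbf{C_1} \to \mathbf{C_0}$. Let $u$ be an object of $\mathbf{C}$ and let $h \colon \mathbf{C_0} \to \mathbf{C_1}$ be a map assigning to each object $e$ a morphism $h(e) \colon e \to u$, with $h(u) = \mathrm{id}_u$. For objects $e,e'$ put $h_{e,e'} = h(e')^{-1}h(e) \colon e \to e'$, and for each bijection $\sigma$ of $\mathbf{C_0}$ let $h_\sigma$ be the bisection $e \mapsto h_{e,\sigma(e)}$. Let $N$ be the subgroup of $\mathrm{Bis}(\mathbf{C})$ consisting of the bisections $n$ with $t\circ n = \mathrm{id}_{\mathbf{C_0}}$ (so $N \cong \prod_{e} \mathrm{End}(e)$), and let $H = \{h_\sigma : \sigma \text{ a bijection of } \mathbf{C_0}\}$. Then $\mathrm{Bis}(\mathbf{C})$ is generated by its subgroups $N$ and $H$; moreover $H$ acts on $N$ (by group automorphisms), and $\mathrm{Bis}(\mathbf{C})$ is isomorphic to the corresponding semidirect product $N \rtimes H$.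
   Context: A groupoid is a category in which every morphism is invertible. A bisection of $\mathbf{C}$ is a map $b \colon \mathbf{C_0} \to \mathbf{C_1}$ such that $s \circ b$ is the identity of $\mathbf{C_0}$ and $t \circ b \colon \mathbf{C_0} \to \mathbf{C_0}$ is a bijection. Bisections form a group $\mathrm{Bis}(\mathbf{C})$ under the composition $(b' \star b)(e) = b'(t(b(e))) \circ b(e)$, with inverse $b^{-1}(e) = b((t\circ b)^{-1}(e))^{-1}$. The set $H$ of bisections $h_\sigma$ is a subgroup of $\mathrm{Bis}(\mathbf{C})$ isomorphic to the group of bijections of $\mathbf{C_0}$. *)

theory Defs
  imports "HOL-Algebra.Algebra" "HOL-Library.FuncSet"
begin

text \<open>A small category/groupoid given by its set of objects, set of morphisms,
 source, target, composition (cmp g f = g o f, defined when src g = tgt f) and identities.\<close>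
record ('o, 'm) smallcat =
  Obj :: "'o set"
  Arr :: "'m set"
  src :: "'m \<Rightarrow> 'o"
  tgt :: "'m \<Rightarrow> 'o"
  cmp :: "'m \<Rightarrow> 'm \<Rightarrow> 'm"
  idm :: "'o \<Rightarrow> 'm"

definition is_category :: "('o, 'm) smallcat \<Rightarrow> bool" where
  "is_category C \<longleftrightarrow>
     (\<forall>f\<in>Arr C. src C f \<in> Obj C \<and> tgt C f \<in> Obj C) \<and>
     (\<forall>e\<in>Obj C. idm C e \<in> Arr C \<and> src C (idm C e) = e \<and> tgt C (idm C e) = e) \<and>
     (\<forall>f\<in>Arr C. \<forall>g\<in>Arr C. src C g = tgt C f \<longrightarrow>
        cmp C g f \<in> Arr C \<and> src C (cmp C g f) = src C f \<and> tgt C (cmp C g f) = tgt C g) \<and>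
     (\<forall>f\<in>Arr C. \<forall>g\<in>Arr C. \<forall>k\<in>Arr C. src C g = tgt C f \<longrightarrow> src C k = tgt C g \<longrightarrow>
        cmp C k (cmp C g f) = cmp C (cmp C k g) f) \<and>
     (\<forall>f\<in>Arr C. cmp C (idm C (tgt C f)) f = f \<and> cmp C f (idm C (src C f)) = f)"

definition is_inverse :: "('o, 'm) smallcat \<Rightarrow> 'm \<Rightarrow> 'm \<Rightarrow> bool" where
  "is_inverse C f g \<longleftrightarrow> g \<in> Arr C \<and> src C g = tgt C f \<and> tgt C g = src C f \<and>
     cmp C g f = idm C (src C f) \<and> cmp C f g = idm C (tgt C f)"

definition is_groupoid :: "('o, 'm) smallcat \<Rightarrow> bool" where
  "is_groupoid C \<longleftrightarrow> is_category C \<and> (\<forall>f\<in>Arr C. \<exists>g. is_inverse C f g)"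

definition minv :: "('o, 'm) smallcat \<Rightarrow> 'm \<Rightarrow> 'm" where
  "minv C f = (SOME g. is_inverse C f g)"

definition bisections :: "('o, 'm) smallcat \<Rightarrow> ('o \<Rightarrow> 'm) set" where
  "bisections C = {b \<in> Obj C \<rightarrow>\<^sub>E Arr C. (\<forall>e\<in>Obj C. src C (b e) = e) \<and>
                    bij_betw (\<lambda>e. tgt C (b e)) (Obj C) (Obj C)}"

definition Bis :: "('o, 'm) smallcat \<Rightarrow> ('o \<Rightarrow> 'm) monoid" where
  "Bis C = \<lparr> carrier = bisections C,
             monoid.mult = (\<lambda>b' b. \<lambda>e\<in>Obj C. cmp C (b' (tgt C (b e))) (b e)),
             monoid.one = (\<lambda>e\<in>Obj C. idm C e) \<rparr>"

definition hpair :: "('o, 'm) smallcat \<Rightarrow> ('o \<Rightarrow> 'm) \<Rightarrow> 'o \<Rightarrow> 'o \<Rightarrow> 'm" where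
  "hpair C h e e' = cmp C (minv C (h e')) (h e)"

definition hsigma :: "('o, 'm) smallcat \<Rightarrow> ('o \<Rightarrow> 'm) \<Rightarrow> ('o \<Rightarrow> 'o) \<Rightarrow> ('o \<Rightarrow> 'm)" where
  "hsigma C h \<sigma> = (\<lambda>e\<in>Obj C. hpair C h e (\<sigma> e))"

definition Nsub :: "('o, 'm) smallcat \<Rightarrow> ('o \<Rightarrow> 'm) set" where
  "Nsub C = {n \<in> bisections C. \<forall>e\<in>Obj C. tgt C (n e) = e}"

definition Hsub :: "('o, 'm) smallcat \<Rightarrow> ('o \<Rightarrow> 'm) \<Rightarrow> ('o \<Rightarrow> 'm) set" where
  "Hsub C h = {hsigma C h \<sigma> | \<sigma>. bij_betw \<sigma> (Obj C) (Obj C)}"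

definition semidirect_product ::
  "('a, 'c) monoid_scheme \<Rightarrow> ('b, 'd) monoid_scheme \<Rightarrow> ('b \<Rightarrow> 'a \<Rightarrow> 'a) \<Rightarrow> ('a \<times> 'b) monoid" where
  "semidirect_product G K \<phi> =
     \<lparr> carrier = carrier G \<times> carrier K,
       monoid.mult = (\<lambda>(n, k) (n', k'). (n \<otimes>\<^bsub>G\<^esub> \<phi> k n', k \<otimes>\<^bsub>K\<^esub> k')),
       monoid.one = (\<one>\<^bsub>G\<^esub>, \<one>\<^bsub>K\<^esub>) \<rparr>"

definition conj_act :: "('o, 'm) smallcat \<Rightarrow> ('o \<Rightarrow> 'm) \<Rightarrow> ('o \<Rightarrow> 'm) \<Rightarrow> ('o \<Rightarrow> 'm)" where
  "conj_act C x n = x \<otimes>\<^bsub>Bis C\<^esub> n \<otimes>\<^bsub>Bis C\<^esub> inv\<^bsub>Bis C\<^esub> x"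

end

theory Submission
  imports Defs
begin


lemma iso_inv_gen:
  assumes h: "h \<in> hom G H" "bij_betw h (carrier G) (carrier H)"
    and cl: "\<And>a b. a \<in> carrier G \<Longrightarrow> b \<in> carrier G \<Longrightarrow> a \<otimes>\<^bsub>G\<^esub> b \<in> carrier G"
  shows "inv_into (carrier G) h \<in> iso H G"
proof -
  have HG: "bij_betw (inv_into (carrier G) h) (carrier H) (carrier G)"
    using h by (simp add: bij_betw_inv_into)
  have *: "\<And>x. x \<in> carrier H \<Longrightarrow> inv_into (carrier G) h x \<in> carrier G"
    by (meson HG bij_betwE)
  have "inv_into (carrier G) h \<in> hom H G"
    unfolding hom_def
  proof safe
    show "\<And>x. x \<in> carrier H \<Longrightarrow> inv_into (carrier G) h x \<in> carrier G" by (rule *)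
    show "inv_into (carrier G) h (x \<otimes>\<^bsub>H\<^esub> y) = inv_into (carrier G) h x \<otimes>\<^bsub>G\<^esub> inv_into (carrier G) h y"
      if "x \<in> carrier H" "y \<in> carrier H" for x y
    proof (rule inv_into_f_eq)
      show "inj_on h (carrier G)"
        using bij_betw_def h(2) by blast
      show "inv_into (carrier G) h x \<otimes>\<^bsub>G\<^esub> inv_into (carrier G) h y \<in> carrier G"
        by (simp add: * that cl)
      show "h (inv_into (carrier G) h x \<otimes>\<^bsub>G\<^esub> inv_into (carrier G) h y) = x \<otimes>\<^bsub>H\<^esub> y"
        using h bij_betw_inv_into_right [of h] unfolding hom_def by (simp add: "*" that)
    qed
  qed
  then show ?thesis
    by (simp add: Group.iso_def bij_betw_inv_into h)
qed

lemma (in group) invc1 [simp]: "x \<in> carrier G \<Longrightarrow> y \<in> carrier G \<Longrightarrow> inv x \<otimes> (x \<otimes> y) = y"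
  by (simp add: m_assoc[symmetric])
lemma (in group) invc2 [simp]: "x \<in> carrier G \<Longrightarrow> y \<in> carrier G \<Longrightarrow> x \<otimes> (inv x \<otimes> y) = y"
  by (simp add: m_assoc[symmetric])

lemma (in group) semidirect_abs:
  assumes N: "subgroup N G" and H: "subgroup H G"
    and nor: "\<And>x n. x \<in> H \<Longrightarrow> n \<in> N \<Longrightarrow> x \<otimes> n \<otimes> inv x \<in> N"
    and inter: "\<And>x. x \<in> N \<Longrightarrow> x \<in> H \<Longrightarrow> x = \<one>"
    and dec: "\<And>g. g \<in> carrier G \<Longrightarrow> \<exists>n\<in>N. \<exists>k\<in>H. g = n \<otimes> k"
  defines "cj \<equiv> (\<lambda>x n. x \<otimes> n \<otimes> inv x)"
  shows "generate G (N \<union> H) = carrier G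
    \<and> (\<forall>x\<in>H. restrict (cj x) N \<in> iso (G\<lparr>carrier := N\<rparr>) (G\<lparr>carrier := N\<rparr>))
    \<and> (\<forall>n\<in>N. cj \<one> n = n)
    \<and> (\<forall>x\<in>H. \<forall>y\<in>H. \<forall>n\<in>N. cj (x \<otimes> y) n = cj x (cj y n))
    \<and> G \<cong> semidirect_product (G\<lparr>carrier := N\<rparr>) (G\<lparr>carrier := H\<rparr>) cj"
proof (intro conjI)
  have NG: "N \<subseteq> carrier G" and HG: "H \<subseteq> carrier G"
    using N H subgroup.subset by blast+
  show "generate G (N \<union> H) = carrier G"
  proof
    show "generate G (N \<union> H) \<subseteq> carrier G" using NG HG generate_incl by blast
    show "carrier G \<subseteq> generate G (N \<union> H)"
    proof
      fix g assume "g \<in> carrier G"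
      then obtain n k where "n \<in> N" "k \<in> H" "g = n \<otimes> k" using dec by blast
      then show "g \<in> generate G (N \<union> H)"
        by (metis UnI1 UnI2 generate.eng generate.incl)
    qed
  qed
  show "\<forall>x\<in>H. restrict (cj x) N \<in> iso (G\<lparr>carrier := N\<rparr>) (G\<lparr>carrier := N\<rparr>)"
  proof
    fix x assume x: "x \<in> H"
    hence xG: "x \<in> carrier G" using HG by blast
    have ix: "inv x \<in> H" using subgroup.m_inv_closed[OF H x] .
    have cjN: "\<And>n. n \<in> N \<Longrightarrow> cj x n \<in> N" unfolding cj_def using nor x by blast
    have cjN': "\<And>n. n \<in> N \<Longrightarrow> cj (inv x) n \<in> N" unfolding cj_def using nor ix by blast
    have bk1: "cj (inv x) (cj x n) = n" if "n \<in> N" for n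
    proof -
      have "n \<in> carrier G" using that NG by auto
      then show ?thesis using xG by (simp add: cj_def m_assoc)
    qed
    have bk2: "cj x (cj (inv x) n) = n" if "n \<in> N" for n
    proof -
      have "n \<in> carrier G" using that NG by auto
      then show ?thesis using xG by (simp add: cj_def m_assoc)
    qed
    show "restrict (cj x) N \<in> iso (G\<lparr>carrier := N\<rparr>) (G\<lparr>carrier := N\<rparr>)"
    proof (rule isoI)
      show "restrict (cj x) N \<in> hom (G\<lparr>carrier := N\<rparr>) (G\<lparr>carrier := N\<rparr>)"
        unfolding hom_def
      proof (intro CollectI conjI ballI)
        show "restrict (cj x) N \<in> carrier (G\<lparr>carrier := N\<rparr>) \<rightarrow> carrier (G\<lparr>carrier := N\<rparr>)"
          using cjN by (auto simp: Pi_iff)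
        fix a b assume a: "a \<in> carrier (G\<lparr>carrier := N\<rparr>)" and b: "b \<in> carrier (G\<lparr>carrier := N\<rparr>)"
        hence a': "a \<in> N" and b': "b \<in> N" by simp_all
        hence ab: "a \<otimes> b \<in> N" using subgroup.m_closed[OF N] by blast
        have aG: "a \<in> carrier G" and bG: "b \<in> carrier G" using a' b' NG by auto
        have "cj x (a \<otimes> b) = cj x a \<otimes> cj x b"
          unfolding cj_def using aG bG xG by (simp add: m_assoc)
        then show "restrict (cj x) N (a \<otimes>\<^bsub>G\<lparr>carrier := N\<rparr>\<^esub> b) = restrict (cj x) N a \<otimes>\<^bsub>G\<lparr>carrier := N\<rparr>\<^esub> restrict (cj x) N b"
          using a' b' ab by simp
      qed
      show "bij_betw (restrict (cj x) N) (carrier (G\<lparr>carrier := N\<rparr>)) (carrier (G\<lparr>carrier := N\<rparr>))"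
        apply (rule bij_betw_byWitness[where f'="cj (inv x)"])
        using bk1 bk2 cjN cjN' by auto
    qed
  qed
  show "\<forall>n\<in>N. cj \<one> n = n" using NG by (auto simp: cj_def)
  show "\<forall>x\<in>H. \<forall>y\<in>H. \<forall>n\<in>N. cj (x \<otimes> y) n = cj x (cj y n)"
  proof (intro ballI)
    fix x y n assume "x \<in> H" "y \<in> H" "n \<in> N"
    hence "x \<in> carrier G" "y \<in> carrier G" "n \<in> carrier G" using NG HG by auto
    then show "cj (x \<otimes> y) n = cj x (cj y n)" by (simp add: cj_def m_assoc inv_mult_group)
  qed
  define SD where "SD = semidirect_product (G\<lparr>carrier := N\<rparr>) (G\<lparr>carrier := H\<rparr>) cj"
  define psi where "psi = (\<lambda>p. fst p \<otimes> snd p)"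
  have cSD: "carrier SD = N \<times> H" by (simp add: SD_def semidirect_product_def)
  have mSD: "\<And>n k n' k'. (n, k) \<otimes>\<^bsub>SD\<^esub> (n', k') = (n \<otimes> cj k n', k \<otimes> k')"
    by (simp add: SD_def semidirect_product_def)
  have hom: "psi \<in> hom SD G"
    unfolding hom_def
  proof (safe)
    fix p assume "p \<in> carrier SD"
    then show "psi p \<in> carrier G" using NG HG cSD psi_def by (auto intro!: m_closed dest: subsetD)
  next
    fix p q assume p: "p \<in> carrier SD" and q: "q \<in> carrier SD"
    obtain n k n' k' where pq: "p = (n, k)" "q = (n', k')" by (cases p, cases q) auto
    have "n \<in> carrier G" "k \<in> carrier G" "n' \<in> carrier G" "k' \<in> carrier G"
      using p q pq cSD NG HG by auto
    then show "psi (p \<otimes>\<^bsub>SD\<^esub> q) = psi p \<otimes> psi q"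
      by (simp add: pq mSD psi_def cj_def m_assoc)
  qed
  have bij: "bij_betw psi (carrier SD) (carrier G)"
    unfolding bij_betw_def
  proof
    show "inj_on psi (carrier SD)"
    proof (rule inj_onI)
      fix p q assume p: "p \<in> carrier SD" and q: "q \<in> carrier SD" and e: "psi p = psi q"
      obtain n k n' k' where pq: "p = (n, k)" "q = (n', k')" by (cases p, cases q) auto
      have mem: "n \<in> N" "k \<in> H" "n' \<in> N" "k' \<in> H" using p q pq cSD by auto
      hence G: "n \<in> carrier G" "k \<in> carrier G" "n' \<in> carrier G" "k' \<in> carrier G" using NG HG by auto
      have e2: "n \<otimes> k = n' \<otimes> k'" using e pq psi_def by simp
      have eq: "inv n' \<otimes> n = k' \<otimes> inv k"
      proof -
        have "inv n' \<otimes> n = inv n' \<otimes> (n \<otimes> k) \<otimes> inv k" using G by (simp add: m_assoc)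
        also have "\<dots> = inv n' \<otimes> (n' \<otimes> k') \<otimes> inv k" using e2 by simp
        also have "\<dots> = k' \<otimes> inv k" using G by (simp add: m_assoc[symmetric])
        finally show ?thesis .
      qed
      have inN: "inv n' \<otimes> n \<in> N"
        using subgroup.m_closed[OF N subgroup.m_inv_closed[OF N mem(3)] mem(1)] .
      have inH: "k' \<otimes> inv k \<in> H"
        using subgroup.m_closed[OF H mem(4) subgroup.m_inv_closed[OF H mem(2)]] .
      have one: "inv n' \<otimes> n = \<one>" using inter[OF inN] inH eq by simp
      have "n = n' \<otimes> (inv n' \<otimes> n)" using G by simp
      also have "\<dots> = n'" using one G by simp
      finally have "n = n'" .
      with e2 G have "k = k'" by simp
      with \<open>n = n'\<close> pq show "p = q" by simp
    qed
    show "psi ` carrier SD = carrier G"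
    proof
      show "psi ` carrier SD \<subseteq> carrier G" using hom by (auto simp: hom_def)
      show "carrier G \<subseteq> psi ` carrier SD"
      proof
        fix g assume "g \<in> carrier G"
        then obtain n k where "n \<in> N" "k \<in> H" "g = n \<otimes> k" using dec by blast
        then show "g \<in> psi ` carrier SD" using cSD psi_def by (auto intro!: image_eqI[where x="(n,k)"])
      qed
    qed
  qed
  have cl: "\<And>a b. a \<in> carrier SD \<Longrightarrow> b \<in> carrier SD \<Longrightarrow> a \<otimes>\<^bsub>SD\<^esub> b \<in> carrier SD"
  proof -
    fix a b assume a: "a \<in> carrier SD" and b: "b \<in> carrier SD"
    obtain n k n' k' where pq: "a = (n, k)" "b = (n', k')" by (cases a, cases b) auto
    have mem: "n \<in> N" "k \<in> H" "n' \<in> N" "k' \<in> H" using a b pq cSD by auto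
    have "cj k n' \<in> N" unfolding cj_def using nor mem by blast
    moreover have "n \<otimes> cj k n' \<in> N" using subgroup.m_closed[OF N mem(1) calculation] .
    moreover have "k \<otimes> k' \<in> H" using subgroup.m_closed[OF H mem(2) mem(4)] .
    ultimately have "(n \<otimes> cj k n', k \<otimes> k') \<in> N \<times> H" by blast
    then show "a \<otimes>\<^bsub>SD\<^esub> b \<in> carrier SD"
      unfolding pq mSD cSD .
  qed
  show "G \<cong> semidirect_product (G\<lparr>carrier := N\<rparr>) (G\<lparr>carrier := H\<rparr>) cj"
  proof -
    have "G \<cong> SD" by (rule is_isoI[OF iso_inv_gen[OF hom bij cl]])
    then show ?thesis unfolding SD_def .
  qed
qed



lemma bij_cong': "bij_betw g A B \<Longrightarrow> (\<And>a. a \<in> A \<Longrightarrow> f a = g a) \<Longrightarrow> bij_betw f A B"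
  using bij_betw_cong by metis

lemma bij_idl: "bij_betw (\<lambda>e. e) A A" by (simp add: bij_betw_def)

locale gpd =
  fixes C :: "('o, 'm) smallcat"
  assumes gpd: "is_groupoid C"
begin

lemma cat: "is_category C" using gpd by (simp add: is_groupoid_def)

lemma ar_src: "f \<in> Arr C \<Longrightarrow> src C f \<in> Obj C" using cat by (simp add: is_category_def)
lemma ar_tgt: "f \<in> Arr C \<Longrightarrow> tgt C f \<in> Obj C" using cat by (simp add: is_category_def)
lemma id_ar: "e \<in> Obj C \<Longrightarrow> idm C e \<in> Arr C" using cat by (simp add: is_category_def)
lemma id_src: "e \<in> Obj C \<Longrightarrow> src C (idm C e) = e" using cat by (simp add: is_category_def)
lemma id_tgt: "e \<in> Obj C \<Longrightarrow> tgt C (idm C e) = e" using cat by (simp add: is_category_def)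
lemma comp_ar: "f \<in> Arr C \<Longrightarrow> g \<in> Arr C \<Longrightarrow> src C g = tgt C f \<Longrightarrow> cmp C g f \<in> Arr C"
  using cat unfolding is_category_def by blast
lemma comp_src: "f \<in> Arr C \<Longrightarrow> g \<in> Arr C \<Longrightarrow> src C g = tgt C f \<Longrightarrow> src C (cmp C g f) = src C f"
  using cat unfolding is_category_def by blast
lemma comp_tgt: "f \<in> Arr C \<Longrightarrow> g \<in> Arr C \<Longrightarrow> src C g = tgt C f \<Longrightarrow> tgt C (cmp C g f) = tgt C g"
  using cat unfolding is_category_def by blast
lemma assoc: "f \<in> Arr C \<Longrightarrow> g \<in> Arr C \<Longrightarrow> k \<in> Arr C \<Longrightarrow> src C g = tgt C f \<Longrightarrow> src C k = tgt C g \<Longrightarrow>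
        cmp C k (cmp C g f) = cmp C (cmp C k g) f"
  using cat unfolding is_category_def by blast
lemma id_l: "f \<in> Arr C \<Longrightarrow> cmp C (idm C (tgt C f)) f = f"
  using cat unfolding is_category_def by blast
lemma id_r: "f \<in> Arr C \<Longrightarrow> cmp C f (idm C (src C f)) = f"
  using cat unfolding is_category_def by blast

lemma minv_inv: "f \<in> Arr C \<Longrightarrow> is_inverse C f (minv C f)"
  unfolding minv_def using gpd unfolding is_groupoid_def by (metis someI_ex)

lemma minv_ar: "f \<in> Arr C \<Longrightarrow> minv C f \<in> Arr C" using minv_inv by (simp add: is_inverse_def)
lemma minv_src: "f \<in> Arr C \<Longrightarrow> src C (minv C f) = tgt C f" using minv_inv by (simp add: is_inverse_def)
lemma minv_tgt: "f \<in> Arr C \<Longrightarrow> tgt C (minv C f) = src C f" using minv_inv by (simp add: is_inverse_def)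
lemma minv_l: "f \<in> Arr C \<Longrightarrow> cmp C (minv C f) f = idm C (src C f)" using minv_inv by (simp add: is_inverse_def)
lemma minv_r: "f \<in> Arr C \<Longrightarrow> cmp C f (minv C f) = idm C (tgt C f)" using minv_inv by (simp add: is_inverse_def)

lemma bisD:
  assumes "b \<in> bisections C" "e \<in> Obj C"
  shows "b e \<in> Arr C" "src C (b e) = e" "tgt C (b e) \<in> Obj C"
  using assms by (auto simp: bisections_def intro: ar_tgt)

lemma bis_bij: "b \<in> bisections C \<Longrightarrow> bij_betw (\<lambda>e. tgt C (b e)) (Obj C) (Obj C)"
  by (simp add: bisections_def)

lemma bis_ext: "b \<in> bisections C \<Longrightarrow> b \<in> extensional (Obj C)"
  by (auto simp: bisections_def PiE_def)

lemma bisI: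
  assumes "b \<in> extensional (Obj C)" "\<And>e. e \<in> Obj C \<Longrightarrow> b e \<in> Arr C"
    "\<And>e. e \<in> Obj C \<Longrightarrow> src C (b e) = e" "bij_betw (\<lambda>e. tgt C (b e)) (Obj C) (Obj C)"
  shows "b \<in> bisections C"
  using assms by (auto simp: bisections_def PiE_def Pi_def)

lemma carrier_Bis: "carrier (Bis C) = bisections C" by (simp add: Bis_def)

lemma mult_apply: "e \<in> Obj C \<Longrightarrow> (b' \<otimes>\<^bsub>Bis C\<^esub> b) e = cmp C (b' (tgt C (b e))) (b e)"
  by (simp add: Bis_def)
lemma mult_ext: "(b' \<otimes>\<^bsub>Bis C\<^esub> b) \<in> extensional (Obj C)"
  by (simp add: Bis_def)
lemma one_apply: "e \<in> Obj C \<Longrightarrow> \<one>\<^bsub>Bis C\<^esub> e = idm C e"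
  by (simp add: Bis_def)
lemma one_ext: "\<one>\<^bsub>Bis C\<^esub> \<in> extensional (Obj C)"
  by (simp add: Bis_def)

lemma mult_props:
  assumes b: "b \<in> bisections C" and b': "b' \<in> bisections C" and e: "e \<in> Obj C"
  shows "(b' \<otimes>\<^bsub>Bis C\<^esub> b) e \<in> Arr C" "src C ((b' \<otimes>\<^bsub>Bis C\<^esub> b) e) = e"
    "tgt C ((b' \<otimes>\<^bsub>Bis C\<^esub> b) e) = tgt C (b' (tgt C (b e)))"
proof -
  have 1: "b e \<in> Arr C" "src C (b e) = e" "tgt C (b e) \<in> Obj C" using bisD[OF b e] by auto
  have 2: "b' (tgt C (b e)) \<in> Arr C" "src C (b' (tgt C (b e))) = tgt C (b e)"
    using bisD[OF b' 1(3)] by auto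
  show "(b' \<otimes>\<^bsub>Bis C\<^esub> b) e \<in> Arr C" using 1 2 comp_ar by (simp add: mult_apply e)
  show "src C ((b' \<otimes>\<^bsub>Bis C\<^esub> b) e) = e" using 1 2 comp_src by (simp add: mult_apply e)
  show "tgt C ((b' \<otimes>\<^bsub>Bis C\<^esub> b) e) = tgt C (b' (tgt C (b e)))" using 1 2 comp_tgt by (simp add: mult_apply e)
qed

lemma mult_closed:
  assumes b': "b' \<in> bisections C" and b: "b \<in> bisections C"
  shows "b' \<otimes>\<^bsub>Bis C\<^esub> b \<in> bisections C"
proof (rule bisI)
  show "b' \<otimes>\<^bsub>Bis C\<^esub> b \<in> extensional (Obj C)" by (rule mult_ext)
  show "\<And>e. e \<in> Obj C \<Longrightarrow> (b' \<otimes>\<^bsub>Bis C\<^esub> b) e \<in> Arr C" using mult_props[OF b b'] by blast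
  show "\<And>e. e \<in> Obj C \<Longrightarrow> src C ((b' \<otimes>\<^bsub>Bis C\<^esub> b) e) = e" using mult_props[OF b b'] by blast
  have "bij_betw ((\<lambda>e. tgt C (b' e)) \<circ> (\<lambda>e. tgt C (b e))) (Obj C) (Obj C)"
    using bij_betw_trans[OF bis_bij[OF b] bis_bij[OF b']] .
  then show "bij_betw (\<lambda>e. tgt C ((b' \<otimes>\<^bsub>Bis C\<^esub> b) e)) (Obj C) (Obj C)"
    by (rule bij_cong') (simp add: mult_props[OF b b'])
qed

lemma one_closed: "\<one>\<^bsub>Bis C\<^esub> \<in> bisections C"
proof (rule bisI)
  show "\<one>\<^bsub>Bis C\<^esub> \<in> extensional (Obj C)" by (rule one_ext)
  show "\<And>e. e \<in> Obj C \<Longrightarrow> \<one>\<^bsub>Bis C\<^esub> e \<in> Arr C" by (simp add: one_apply id_ar)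
  show "\<And>e. e \<in> Obj C \<Longrightarrow> src C (\<one>\<^bsub>Bis C\<^esub> e) = e" by (simp add: one_apply id_src)
  show "bij_betw (\<lambda>e. tgt C (\<one>\<^bsub>Bis C\<^esub> e)) (Obj C) (Obj C)"
    by (rule bij_cong'[OF bij_idl]) (simp add: one_apply id_tgt)
qed

lemma bis_eqI: "f \<in> extensional (Obj C) \<Longrightarrow> g \<in> extensional (Obj C) \<Longrightarrow> (\<And>e. e \<in> Obj C \<Longrightarrow> f e = g e) \<Longrightarrow> f = g"
  by (rule extensionalityI) auto

lemma m_assoc:
  assumes x: "x \<in> bisections C" and y: "y \<in> bisections C" and z: "z \<in> bisections C"
  shows "(x \<otimes>\<^bsub>Bis C\<^esub> y) \<otimes>\<^bsub>Bis C\<^esub> z = x \<otimes>\<^bsub>Bis C\<^esub> (y \<otimes>\<^bsub>Bis C\<^esub> z)"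
proof (rule bis_eqI[OF mult_ext mult_ext])
  fix e assume e: "e \<in> Obj C"
  have z1: "z e \<in> Arr C" "src C (z e) = e" "tgt C (z e) \<in> Obj C" using bisD[OF z e] by auto
  define e1 where "e1 = tgt C (z e)"
  have y1: "y e1 \<in> Arr C" "src C (y e1) = e1" "tgt C (y e1) \<in> Obj C" using bisD[OF y] z1 e1_def by auto
  define e2 where "e2 = tgt C (y e1)"
  have x1: "x e2 \<in> Arr C" "src C (x e2) = e2" "tgt C (x e2) \<in> Obj C" using bisD[OF x] y1 e2_def by auto
  have "((x \<otimes>\<^bsub>Bis C\<^esub> y) \<otimes>\<^bsub>Bis C\<^esub> z) e = cmp C (cmp C (x e2) (y e1)) (z e)"
    using e z1 by (simp add: mult_apply e1_def e2_def)
  also have "\<dots> = cmp C (x e2) (cmp C (y e1) (z e))"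
    using assoc[of "z e" "y e1" "x e2"] x1 y1 z1 e1_def e2_def by simp
  also have "\<dots> = (x \<otimes>\<^bsub>Bis C\<^esub> (y \<otimes>\<^bsub>Bis C\<^esub> z)) e"
    using e z1 mult_props[OF z y e] by (simp add: mult_apply e1_def e2_def)
  finally show "((x \<otimes>\<^bsub>Bis C\<^esub> y) \<otimes>\<^bsub>Bis C\<^esub> z) e = (x \<otimes>\<^bsub>Bis C\<^esub> (y \<otimes>\<^bsub>Bis C\<^esub> z)) e" .
qed

lemma l_one: "x \<in> bisections C \<Longrightarrow> \<one>\<^bsub>Bis C\<^esub> \<otimes>\<^bsub>Bis C\<^esub> x = x"
  apply (rule bis_eqI[OF mult_ext bis_ext], assumption)
  using bisD by (simp add: mult_apply one_apply id_l)

lemma l_inv_ex: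
  assumes b: "b \<in> bisections C"
  shows "\<exists>y\<in>bisections C. y \<otimes>\<^bsub>Bis C\<^esub> b = \<one>\<^bsub>Bis C\<^esub>"
proof -
  define \<tau> where "\<tau> = (\<lambda>e. tgt C (b e))"
  have bj: "bij_betw \<tau> (Obj C) (Obj C)" using bis_bij[OF b] \<tau>_def by simp
  define \<tau>' where "\<tau>' = inv_into (Obj C) \<tau>"
  have bj': "bij_betw \<tau>' (Obj C) (Obj C)" using bij_betw_inv_into[OF bj] \<tau>'_def by simp
  have t'O: "\<And>e. e \<in> Obj C \<Longrightarrow> \<tau>' e \<in> Obj C" using bj' bij_betwE by blast
  have r: "\<And>e. e \<in> Obj C \<Longrightarrow> \<tau> (\<tau>' e) = e" using bij_betw_inv_into_right[OF bj] \<tau>'_def by simp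
  have l: "\<And>e. e \<in> Obj C \<Longrightarrow> \<tau>' (\<tau> e) = e" using bij_betw_inv_into_left[OF bj] \<tau>'_def by simp
  define y where "y = (\<lambda>e\<in>Obj C. minv C (b (\<tau>' e)))"
  have y: "y \<in> bisections C"
  proof (rule bisI)
    show "y \<in> extensional (Obj C)" by (simp add: y_def)
    show "\<And>e. e \<in> Obj C \<Longrightarrow> y e \<in> Arr C" using bisD[OF b] t'O minv_ar by (simp add: y_def)
    show "\<And>e. e \<in> Obj C \<Longrightarrow> src C (y e) = e" using bisD[OF b] t'O minv_src r by (simp add: y_def \<tau>_def)
    have tg: "\<And>e. e \<in> Obj C \<Longrightarrow> tgt C (y e) = \<tau>' e" using bisD[OF b] t'O minv_tgt by (simp add: y_def)
    show "bij_betw (\<lambda>e. tgt C (y e)) (Obj C) (Obj C)"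
      by (rule bij_cong'[OF bj' tg])
  qed
  have "y \<otimes>\<^bsub>Bis C\<^esub> b = \<one>\<^bsub>Bis C\<^esub>"
  proof (rule bis_eqI[OF mult_ext one_ext])
    fix e assume e: "e \<in> Obj C"
    have "tgt C (b e) \<in> Obj C" using bisD[OF b e] by simp
    then have "y (tgt C (b e)) = minv C (b e)" using l[OF e] by (simp add: y_def \<tau>_def)
    then show "(y \<otimes>\<^bsub>Bis C\<^esub> b) e = \<one>\<^bsub>Bis C\<^esub> e"
      using bisD[OF b e] minv_l by (simp add: mult_apply one_apply e)
  qed
  with y show ?thesis by blast
qed

lemma group_Bis: "group (Bis C)"
  apply (rule groupI)
  unfolding carrier_Bis
  using mult_closed one_closed m_assoc l_one l_inv_ex by auto

end


context gpd begin

lemma tgt_mult: "b \<in> bisections C \<Longrightarrow> b' \<in> bisections C \<Longrightarrow> e \<in> Obj C \<Longrightarrow>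
   tgt C ((b' \<otimes>\<^bsub>Bis C\<^esub> b) e) = tgt C (b' (tgt C (b e)))"
  using mult_props by blast

lemma N_sub: "subgroup (Nsub C) (Bis C)"
proof -
  interpret G: group "Bis C" by (rule group_Bis)
  show ?thesis
  proof
    show "Nsub C \<subseteq> carrier (Bis C)" by (auto simp: Nsub_def carrier_Bis)
    show "\<one>\<^bsub>Bis C\<^esub> \<in> Nsub C" using one_closed by (simp add: Nsub_def one_apply id_tgt)
    fix x y assume x: "x \<in> Nsub C" and y: "y \<in> Nsub C"
    have xb: "x \<in> bisections C" and xt: "\<And>e. e \<in> Obj C \<Longrightarrow> tgt C (x e) = e" using x by (auto simp: Nsub_def)
    have yb: "y \<in> bisections C" and yt: "\<And>e. e \<in> Obj C \<Longrightarrow> tgt C (y e) = e" using y by (auto simp: Nsub_def)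
    show "x \<otimes>\<^bsub>Bis C\<^esub> y \<in> Nsub C"
      unfolding Nsub_def using mult_closed[OF xb yb] tgt_mult[OF yb xb] xt yt by simp
    have ib: "inv\<^bsub>Bis C\<^esub> x \<in> bisections C" using xb G.inv_closed carrier_Bis by auto
    have "\<And>e. e \<in> Obj C \<Longrightarrow> tgt C ((inv\<^bsub>Bis C\<^esub> x) e) = e"
    proof -
      fix e assume e: "e \<in> Obj C"
      have "x \<otimes>\<^bsub>Bis C\<^esub> inv\<^bsub>Bis C\<^esub> x = \<one>\<^bsub>Bis C\<^esub>" using xb carrier_Bis G.r_inv by auto
      then have "tgt C ((x \<otimes>\<^bsub>Bis C\<^esub> inv\<^bsub>Bis C\<^esub> x) e) = e" by (simp add: one_apply e id_tgt)
      moreover have "tgt C ((x \<otimes>\<^bsub>Bis C\<^esub> inv\<^bsub>Bis C\<^esub> x) e) = tgt C ((inv\<^bsub>Bis C\<^esub> x) e)"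
        using tgt_mult[OF ib xb e] xt bisD(3)[OF ib e] by simp
      ultimately show "tgt C ((inv\<^bsub>Bis C\<^esub> x) e) = e" by simp
    qed
    then show "inv\<^bsub>Bis C\<^esub> x \<in> Nsub C" using ib by (simp add: Nsub_def)
  qed
qed

lemma N_normal:
  assumes x: "x \<in> bisections C" and n: "n \<in> Nsub C"
  shows "x \<otimes>\<^bsub>Bis C\<^esub> n \<otimes>\<^bsub>Bis C\<^esub> inv\<^bsub>Bis C\<^esub> x \<in> Nsub C"
proof -
  interpret G: group "Bis C" by (rule group_Bis)
  have nb: "n \<in> bisections C" and nt: "\<And>e. e \<in> Obj C \<Longrightarrow> tgt C (n e) = e" using n by (auto simp: Nsub_def)
  have ib: "inv\<^bsub>Bis C\<^esub> x \<in> bisections C" using x G.inv_closed carrier_Bis by auto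
  have xn: "x \<otimes>\<^bsub>Bis C\<^esub> n \<in> bisections C" using mult_closed[OF x nb] .
  have all: "x \<otimes>\<^bsub>Bis C\<^esub> n \<otimes>\<^bsub>Bis C\<^esub> inv\<^bsub>Bis C\<^esub> x \<in> bisections C" using mult_closed[OF xn ib] .
  have one: "x \<otimes>\<^bsub>Bis C\<^esub> inv\<^bsub>Bis C\<^esub> x = \<one>\<^bsub>Bis C\<^esub>" using x carrier_Bis G.r_inv by auto
  have "tgt C ((x \<otimes>\<^bsub>Bis C\<^esub> n \<otimes>\<^bsub>Bis C\<^esub> inv\<^bsub>Bis C\<^esub> x) e) = e" if e: "e \<in> Obj C" for e
  proof -
    have e1: "tgt C ((inv\<^bsub>Bis C\<^esub> x) e) \<in> Obj C" using bisD(3)[OF ib e] .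
    have "tgt C ((x \<otimes>\<^bsub>Bis C\<^esub> n \<otimes>\<^bsub>Bis C\<^esub> inv\<^bsub>Bis C\<^esub> x) e)
        = tgt C ((x \<otimes>\<^bsub>Bis C\<^esub> n) (tgt C ((inv\<^bsub>Bis C\<^esub> x) e)))" using tgt_mult[OF ib xn e] .
    also have "\<dots> = tgt C (x (tgt C (n (tgt C ((inv\<^bsub>Bis C\<^esub> x) e)))))" using tgt_mult[OF nb x e1] .
    also have "\<dots> = tgt C (x (tgt C ((inv\<^bsub>Bis C\<^esub> x) e)))" using nt[OF e1] by simp
    also have "\<dots> = tgt C ((x \<otimes>\<^bsub>Bis C\<^esub> inv\<^bsub>Bis C\<^esub> x) e)" using tgt_mult[OF ib x e] by simp
    also have "\<dots> = e" using one by (simp add: one_apply e id_tgt)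
    finally show ?thesis .
  qed
  then show ?thesis using all by (simp add: Nsub_def)
qed

end

locale gpdh = gpd +
  fixes u h
  assumes u: "u \<in> Obj C"
    and hh: "\<forall>e\<in>Obj C. h e \<in> Arr C \<and> src C (h e) = e \<and> tgt C (h e) = u"
begin

lemma h_ar: "e \<in> Obj C \<Longrightarrow> h e \<in> Arr C" and h_src: "e \<in> Obj C \<Longrightarrow> src C (h e) = e"
  and h_tgt: "e \<in> Obj C \<Longrightarrow> tgt C (h e) = u"
  using hh by auto

lemma hs_apply: "e \<in> Obj C \<Longrightarrow> hsigma C h \<sigma> e = cmp C (minv C (h (\<sigma> e))) (h e)"
  by (simp add: hsigma_def hpair_def)

lemma hs_ext: "hsigma C h \<sigma> \<in> extensional (Obj C)"
  by (simp add: hsigma_def)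

lemma hs_props:
  assumes s: "\<And>e. e \<in> Obj C \<Longrightarrow> \<sigma> e \<in> Obj C" and e: "e \<in> Obj C"
  shows "hsigma C h \<sigma> e \<in> Arr C" "src C (hsigma C h \<sigma> e) = e" "tgt C (hsigma C h \<sigma> e) = \<sigma> e"
proof -
  have a: "h (\<sigma> e) \<in> Arr C" "tgt C (h (\<sigma> e)) = u" "src C (h (\<sigma> e)) = \<sigma> e" using s[OF e] h_ar h_tgt h_src by auto
  have m: "minv C (h (\<sigma> e)) \<in> Arr C" "src C (minv C (h (\<sigma> e))) = u" "tgt C (minv C (h (\<sigma> e))) = \<sigma> e"
    using a minv_ar minv_src minv_tgt by auto
  have b: "h e \<in> Arr C" "tgt C (h e) = u" "src C (h e) = e" using e h_ar h_tgt h_src by auto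
  show "hsigma C h \<sigma> e \<in> Arr C" using comp_ar[OF b(1) m(1)] m b by (simp add: hs_apply e)
  show "src C (hsigma C h \<sigma> e) = e" using comp_src[OF b(1) m(1)] m b by (simp add: hs_apply e)
  show "tgt C (hsigma C h \<sigma> e) = \<sigma> e" using comp_tgt[OF b(1) m(1)] m b by (simp add: hs_apply e)
qed

lemma hs_bis:
  assumes "bij_betw \<sigma> (Obj C) (Obj C)"
  shows "hsigma C h \<sigma> \<in> bisections C"
proof -
  have s: "\<And>e. e \<in> Obj C \<Longrightarrow> \<sigma> e \<in> Obj C" using assms bij_betwE by blast
  show ?thesis
  proof (rule bisI)
    show "hsigma C h \<sigma> \<in> extensional (Obj C)" by (rule hs_ext)
    show "\<And>e. e \<in> Obj C \<Longrightarrow> hsigma C h \<sigma> e \<in> Arr C" using hs_props[where \<sigma>=\<sigma>, OF s] by blast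
    show "\<And>e. e \<in> Obj C \<Longrightarrow> src C (hsigma C h \<sigma> e) = e" using hs_props[where \<sigma>=\<sigma>, OF s] by blast
    have tg: "\<And>e. e \<in> Obj C \<Longrightarrow> tgt C (hsigma C h \<sigma> e) = \<sigma> e" using hs_props[where \<sigma>=\<sigma>, OF s] by blast
    show "bij_betw (\<lambda>e. tgt C (hsigma C h \<sigma> e)) (Obj C) (Obj C)" by (rule bij_cong'[OF assms tg])
  qed
qed

lemma hs_cong: "(\<And>e. e \<in> Obj C \<Longrightarrow> \<sigma> e = \<tau> e) \<Longrightarrow> hsigma C h \<sigma> = hsigma C h \<tau>"
  unfolding hsigma_def hpair_def by (rule restrict_ext) simp

lemma hs_id: "hsigma C h (\<lambda>e. e) = \<one>\<^bsub>Bis C\<^esub>"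
proof (rule bis_eqI[OF hs_ext one_ext])
  fix e assume e: "e \<in> Obj C"
  show "hsigma C h (\<lambda>e. e) e = \<one>\<^bsub>Bis C\<^esub> e"
    using minv_l[OF h_ar[OF e]] h_src[OF e] by (simp add: hs_apply e one_apply)
qed

lemma hs_mult:
  assumes s: "\<And>e. e \<in> Obj C \<Longrightarrow> \<sigma> e \<in> Obj C" and t: "\<And>e. e \<in> Obj C \<Longrightarrow> \<tau> e \<in> Obj C"
  shows "hsigma C h \<sigma> \<otimes>\<^bsub>Bis C\<^esub> hsigma C h \<tau> = hsigma C h (\<lambda>e. \<sigma> (\<tau> e))"
proof (rule bis_eqI[OF mult_ext hs_ext])
  fix e assume e: "e \<in> Obj C"
  have te: "\<tau> e \<in> Obj C" using t[OF e] .
  have ste: "\<sigma> (\<tau> e) \<in> Obj C" using s[OF te] .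
  define a where "a = minv C (h (\<sigma> (\<tau> e)))"
  define b where "b = h (\<tau> e)"
  define c where "c = minv C (h (\<tau> e))"
  define d where "d = h e"
  have A: "a \<in> Arr C" "src C a = u" using a_def ste h_ar h_tgt minv_ar minv_src by auto
  have B: "b \<in> Arr C" "src C b = \<tau> e" "tgt C b = u" using b_def te h_ar h_tgt h_src by auto
  have Cc: "c \<in> Arr C" "src C c = u" "tgt C c = \<tau> e" using c_def te h_ar h_tgt h_src minv_ar minv_src minv_tgt by auto
  have D: "d \<in> Arr C" "tgt C d = u" using d_def e h_ar h_tgt by auto
  have cd: "cmp C c d \<in> Arr C" "tgt C (cmp C c d) = \<tau> e" using comp_ar[OF D(1) Cc(1)] comp_tgt[OF D(1) Cc(1)] Cc D by auto
  have bc: "cmp C b c = idm C u" using minv_r[OF B(1)] B c_def b_def by simp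
  have "(hsigma C h \<sigma> \<otimes>\<^bsub>Bis C\<^esub> hsigma C h \<tau>) e = cmp C (cmp C a b) (cmp C c d)"
    using hs_props(3)[where \<sigma>=\<tau>, OF t e] by (simp add: mult_apply e hs_apply te a_def b_def c_def d_def)
  also have "\<dots> = cmp C a (cmp C b (cmp C c d))"
    using assoc[OF cd(1) B(1) A(1)] cd B A by simp
  also have "\<dots> = cmp C a (cmp C (cmp C b c) d)"
    using assoc[OF D(1) Cc(1) B(1)] D Cc B by simp
  also have "\<dots> = cmp C a d" using bc id_l[OF D(1)] D by simp
  also have "\<dots> = hsigma C h (\<lambda>e. \<sigma> (\<tau> e)) e" by (simp add: hs_apply e a_def d_def)
  finally show "(hsigma C h \<sigma> \<otimes>\<^bsub>Bis C\<^esub> hsigma C h \<tau>) e = hsigma C h (\<lambda>e. \<sigma> (\<tau> e)) e" .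
qed

lemma H_sub: "subgroup (Hsub C h) (Bis C)"
proof -
  interpret G: group "Bis C" by (rule group_Bis)
  show ?thesis
  proof
    show "Hsub C h \<subseteq> carrier (Bis C)" using hs_bis by (auto simp: Hsub_def carrier_Bis)
    have "\<one>\<^bsub>Bis C\<^esub> = hsigma C h (\<lambda>e. e)" using hs_id by simp
    moreover have "bij_betw (\<lambda>e. e) (Obj C) (Obj C)" by (rule bij_idl)
    ultimately show "\<one>\<^bsub>Bis C\<^esub> \<in> Hsub C h" unfolding Hsub_def by blast
    fix x y assume x: "x \<in> Hsub C h" and y: "y \<in> Hsub C h"
    obtain \<sigma> where sb: "bij_betw \<sigma> (Obj C) (Obj C)" and xs: "x = hsigma C h \<sigma>" using x by (auto simp: Hsub_def)
    obtain \<tau> where tb: "bij_betw \<tau> (Obj C) (Obj C)" and yt: "y = hsigma C h \<tau>" using y by (auto simp: Hsub_def)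
    have s: "\<And>e. e \<in> Obj C \<Longrightarrow> \<sigma> e \<in> Obj C" using sb bij_betwE by blast
    have t: "\<And>e. e \<in> Obj C \<Longrightarrow> \<tau> e \<in> Obj C" using tb bij_betwE by blast
    have "bij_betw (\<sigma> \<circ> \<tau>) (Obj C) (Obj C)" using bij_betw_trans[OF tb sb] .
    hence "bij_betw (\<lambda>e. \<sigma> (\<tau> e)) (Obj C) (Obj C)" by (simp add: comp_def)
    moreover have "x \<otimes>\<^bsub>Bis C\<^esub> y = hsigma C h (\<lambda>e. \<sigma> (\<tau> e))" using hs_mult[OF s t] xs yt by simp
    ultimately show "x \<otimes>\<^bsub>Bis C\<^esub> y \<in> Hsub C h" unfolding Hsub_def by blast
    define \<sigma>' where "\<sigma>' = inv_into (Obj C) \<sigma>"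
    have sb': "bij_betw \<sigma>' (Obj C) (Obj C)" using bij_betw_inv_into[OF sb] \<sigma>'_def by simp
    have s': "\<And>e. e \<in> Obj C \<Longrightarrow> \<sigma>' e \<in> Obj C" using sb' bij_betwE by blast
    have l: "\<And>e. e \<in> Obj C \<Longrightarrow> \<sigma>' (\<sigma> e) = e" using bij_betw_inv_into_left[OF sb] \<sigma>'_def by simp
    have "hsigma C h \<sigma>' \<otimes>\<^bsub>Bis C\<^esub> x = hsigma C h (\<lambda>e. \<sigma>' (\<sigma> e))" using hs_mult[OF s' s] xs by simp
    also have "\<dots> = hsigma C h (\<lambda>e. e)" using l by (rule hs_cong)
    also have "\<dots> = \<one>\<^bsub>Bis C\<^esub>" by (rule hs_id)
    finally have "inv\<^bsub>Bis C\<^esub> x = hsigma C h \<sigma>'"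
      using G.inv_equality hs_bis[OF sb] hs_bis[OF sb'] xs carrier_Bis by metis
    then show "inv\<^bsub>Bis C\<^esub> x \<in> Hsub C h" using sb' unfolding Hsub_def by blast
  qed
qed

lemma NH_inter: "x \<in> Nsub C \<Longrightarrow> x \<in> Hsub C h \<Longrightarrow> x = \<one>\<^bsub>Bis C\<^esub>"
proof -
  assume xN: "x \<in> Nsub C" and xH: "x \<in> Hsub C h"
  obtain \<sigma> where sb: "bij_betw \<sigma> (Obj C) (Obj C)" and xs: "x = hsigma C h \<sigma>" using xH by (auto simp: Hsub_def)
  have s: "\<And>e. e \<in> Obj C \<Longrightarrow> \<sigma> e \<in> Obj C" using sb bij_betwE by blast
  have "\<And>e. e \<in> Obj C \<Longrightarrow> \<sigma> e = e"
  proof -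
    fix e assume e: "e \<in> Obj C"
    have "tgt C (x e) = e" using xN e by (simp add: Nsub_def)
    then show "\<sigma> e = e" using hs_props(3)[where \<sigma>=\<sigma>, OF s e] xs by simp
  qed
  then have "x = hsigma C h (\<lambda>e. e)" using xs hs_cong[of \<sigma> "\<lambda>e. e"] by simp
  then show ?thesis using hs_id by simp
qed

lemma decomp:
  assumes g: "g \<in> carrier (Bis C)"
  shows "\<exists>n\<in>Nsub C. \<exists>k\<in>Hsub C h. g = n \<otimes>\<^bsub>Bis C\<^esub> k"
proof -
  interpret G: group "Bis C" by (rule group_Bis)
  have gb: "g \<in> bisections C" using g carrier_Bis by simp
  define \<sigma> where "\<sigma> = (\<lambda>e. tgt C (g e))"
  have sb: "bij_betw \<sigma> (Obj C) (Obj C)" using bis_bij[OF gb] \<sigma>_def by simp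
  have s: "\<And>e. e \<in> Obj C \<Longrightarrow> \<sigma> e \<in> Obj C" using sb bij_betwE by blast
  define k where "k = hsigma C h \<sigma>"
  have kH: "k \<in> Hsub C h" using sb k_def unfolding Hsub_def by blast
  have kb: "k \<in> bisections C" using hs_bis[OF sb] k_def by simp
  define n where "n = g \<otimes>\<^bsub>Bis C\<^esub> inv\<^bsub>Bis C\<^esub> k"
  have nb: "n \<in> bisections C" using n_def gb kb G.inv_closed G.m_closed carrier_Bis by auto
  have gG: "g \<in> carrier (Bis C)" and kG: "k \<in> carrier (Bis C)" using gb kb carrier_Bis by auto
  have nk: "n \<otimes>\<^bsub>Bis C\<^esub> k = g" unfolding n_def using gG kG by (simp add: G.m_assoc)
  have "tgt C (n e) = e" if e: "e \<in> Obj C" for e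
  proof -
    obtain e0 where e0: "e0 \<in> Obj C" "e = \<sigma> e0" using sb e unfolding bij_betw_def by blast
    have "tgt C (g e0) = tgt C ((n \<otimes>\<^bsub>Bis C\<^esub> k) e0)" using nk by simp
    also have "\<dots> = tgt C (n (tgt C (k e0)))" using tgt_mult[OF kb nb e0(1)] .
    also have "\<dots> = tgt C (n e)" using hs_props(3)[where \<sigma>=\<sigma>, OF s e0(1)] k_def e0 by simp
    finally show ?thesis using e0 \<sigma>_def by simp
  qed
  then have "n \<in> Nsub C" using nb by (simp add: Nsub_def)
  with kH nk show ?thesis by blast
qed

end

theorem theorem2:
  fixes C :: "('o, 'm) smallcat" and u :: 'o and h :: "'o \<Rightarrow> 'm"
  assumes "is_groupoid C"
    and "u \<in> Obj C"
    and "\<forall>e\<in>Obj C. h e \<in> Arr C \<and> src C (h e) = e \<and> tgt C (h e) = u"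
    and "h u = idm C u"
  shows "group (Bis C)
    \<and> subgroup (Nsub C) (Bis C) \<and> subgroup (Hsub C h) (Bis C)
    \<and> generate (Bis C) (Nsub C \<union> Hsub C h) = carrier (Bis C)
    \<and> (\<forall>x\<in>Hsub C h. restrict (conj_act C x) (Nsub C)
          \<in> iso ((Bis C)\<lparr>carrier := Nsub C\<rparr>) ((Bis C)\<lparr>carrier := Nsub C\<rparr>))
    \<and> (\<forall>n\<in>Nsub C. conj_act C \<one>\<^bsub>Bis C\<^esub> n = n)
    \<and> (\<forall>x\<in>Hsub C h. \<forall>y\<in>Hsub C h. \<forall>n\<in>Nsub C.
          conj_act C (x \<otimes>\<^bsub>Bis C\<^esub> y) n = conj_act C x (conj_act C y n))
    \<and> Bis C \<cong> semidirect_product ((Bis C)\<lparr>carrier := Nsub C\<rparr>)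
                                   ((Bis C)\<lparr>carrier := Hsub C h\<rparr>) (conj_act C)"
proof -
  interpret gpdh C u h
    by (unfold_locales) (use assms in auto)
  interpret G: group "Bis C" by (rule group_Bis)
  have nor: "\<And>x n. x \<in> Hsub C h \<Longrightarrow> n \<in> Nsub C \<Longrightarrow>
      x \<otimes>\<^bsub>Bis C\<^esub> n \<otimes>\<^bsub>Bis C\<^esub> inv\<^bsub>Bis C\<^esub> x \<in> Nsub C"
  proof -
    fix x n assume x: "x \<in> Hsub C h" and n: "n \<in> Nsub C"
    have "x \<in> bisections C" using subgroup.subset[OF H_sub] x carrier_Bis by auto
    then show "x \<otimes>\<^bsub>Bis C\<^esub> n \<otimes>\<^bsub>Bis C\<^esub> inv\<^bsub>Bis C\<^esub> x \<in> Nsub C" using N_normal n by blast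
  qed
  note A = G.semidirect_abs[OF N_sub H_sub nor NH_inter decomp]
  have cj: "conj_act C = (\<lambda>x n. x \<otimes>\<^bsub>Bis C\<^esub> n \<otimes>\<^bsub>Bis C\<^esub> inv\<^bsub>Bis C\<^esub> x)"
    by (simp add: conj_act_def fun_eq_iff)
  show ?thesis unfolding cj using group_Bis N_sub H_sub A by blast
qed

end
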